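(* Given any instance and any real number $t\ge1$, let $N^*\subseteq N$ be a $t$-cohesive group and $A$ an allocation satisfying EJR-1. Then the average satisfaction of $N^*$ with respect to $A$ is strictly greater than $\frac{t-2+1/t}{2}$.
   Context: Model: There is a set of agents $N=\{1,\dots,n\}$. The resource $R$ consists of a cake $C=[0,c]$ for a real $c\ge 0$ and a set of indivisible goods $G=\{g_1,\dots,g_m\}$ for an integer $m\ge 0$, with $\max(c,m)>0$. A piece of cake is a union of finitely many disjoint closed subintervals of $C$; its length $\ell(\cdot)$ is the sum of the lengths of its intervals. A bundle $R'=(C',G')$ consists of a piece of cake $C'\subseteq C$ and a set $G'\subseteq G$; its size is $s(R')=\ell(C')+|G'|$. Each agent $i$ approves a bundle $R_i=(C_i,G_i)$, and her utility for a bundle $R'$ is $u_i(R')=\ell(C_i\cap C')+|G_i\cap G'|$. A parameter $\alpha\in(0,c+m]$ is given; an allocation is a bundle $A$ with $s(A)\le\alpha$. For a real $t>0$, $N^*\subseteq N$ is $t$-cohesive if $|N^*|\ge t n/\alpha$ and $s(\bigcap_{i\in N^*}R_i)\ge t$. EJR-1: an allocation $A$ satisfies EJR-1 if for every real $t>0$ and every $t$-cohesive group $N^*$, some $j\in N^*$ has $u_j(A)>t-1$. The average satisfaction of a group $N'\subseteq N$ with respect to $A$ is $\frac1{|N'|}\sum_{i\in N'}u_i(A)$. *)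

theory Defs
  imports "HOL-Analysis.Analysis"
begin

definition is_piece :: "real \<Rightarrow> real set \<Rightarrow> bool" where
  "is_piece c S \<longleftrightarrow> (\<exists>I :: (real \<times> real) set. finite I \<and>
      (\<forall>(a,b)\<in>I. 0 \<le> a \<and> a \<le> b \<and> b \<le> c) \<and>
      (\<forall>p\<in>I. \<forall>q\<in>I. p \<noteq> q \<longrightarrow> {fst p..snd p} \<inter> {fst q..snd q} = {}) \<and>
      S = (\<Union>(a,b)\<in>I. {a..b}))"

definition len :: "real set \<Rightarrow> real" where
  "len S = measure lborel S"

definition is_bundle :: "real \<Rightarrow> 'g set \<Rightarrow> real set \<times> 'g set \<Rightarrow> bool" where
  "is_bundle c G B \<longleftrightarrow> is_piece c (fst B) \<and> snd B \<subseteq> G"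

definition bsize :: "real set \<times> 'g set \<Rightarrow> real" where
  "bsize B = len (fst B) + real (card (snd B))"

definition util :: "real set \<times> 'g set \<Rightarrow> real set \<times> 'g set \<Rightarrow> real" where
  "util Ri B = len (fst Ri \<inter> fst B) + real (card (snd Ri \<inter> snd B))"

definition common :: "('a \<Rightarrow> real set \<times> 'g set) \<Rightarrow> 'a set \<Rightarrow> real set \<times> 'g set" where
  "common R S = ((\<Inter>i\<in>S. fst (R i)), (\<Inter>i\<in>S. snd (R i)))"

definition is_instance :: "'a set \<Rightarrow> real \<Rightarrow> 'g set \<Rightarrow> ('a \<Rightarrow> real set \<times> 'g set) \<Rightarrow> real \<Rightarrow> bool" where
  "is_instance N c G R \<alpha> \<longleftrightarrow> finite N \<and> N \<noteq> {} \<and> c \<ge> 0 \<and> finite G \<and>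
     max c (real (card G)) > 0 \<and> (\<forall>i\<in>N. is_bundle c G (R i)) \<and>
     0 < \<alpha> \<and> \<alpha> \<le> c + real (card G)"

definition is_allocation :: "real \<Rightarrow> 'g set \<Rightarrow> real \<Rightarrow> real set \<times> 'g set \<Rightarrow> bool" where
  "is_allocation c G \<alpha> A \<longleftrightarrow> is_bundle c G A \<and> bsize A \<le> \<alpha>"

definition cohesive :: "'a set \<Rightarrow> ('a \<Rightarrow> real set \<times> 'g set) \<Rightarrow> real \<Rightarrow> real \<Rightarrow> 'a set \<Rightarrow> bool" where
  "cohesive N R \<alpha> t S \<longleftrightarrow> S \<subseteq> N \<and> real (card S) \<ge> t * real (card N) / \<alpha> \<and>
     bsize (common R S) \<ge> t"

definition EJR1 :: "'a set \<Rightarrow> ('a \<Rightarrow> real set \<times> 'g set) \<Rightarrow> real \<Rightarrow> real set \<times> 'g set \<Rightarrow> bool" where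
  "EJR1 N R \<alpha> A \<longleftrightarrow> (\<forall>t>0. \<forall>S. cohesive N R \<alpha> t S \<longrightarrow> (\<exists>j\<in>S. util (R j) A > t - 1))"

definition avg_sat :: "('a \<Rightarrow> real set \<times> 'g set) \<Rightarrow> 'a set \<Rightarrow> real set \<times> 'g set \<Rightarrow> real" where
  "avg_sat R S A = (\<Sum>i\<in>S. util (R i) A) / real (card S)"

end

theory Submission
  imports Defs
begin
lemma piece_closed: "is_piece c P \<Longrightarrow> closed P \<and> P \<subseteq> {0..c}"
  unfolding is_piece_def
  apply (elim exE conjE)
  apply (intro conjI)
   apply simp
   apply (rule closed_Union) apply auto
  done

lemma phi_step:
  fixes a x :: real assumes "a > 0"
  shows "(max 0 (x*a-1))^2/(2*a) - (max 0 ((x-1)*a-1))^2/(2*a) \<le> max 0 (x*a-1)"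
proof -
  define p where "p = x*a-1"
  have e: "(x-1)*a-1 = p - a" by (simp add: p_def algebra_simps)
  have "(max 0 p)^2 - (max 0 (p-a))^2 \<le> 2*a*max 0 p"
  proof (cases "p \<le> 0")
    case True then show ?thesis using assms by auto
  next
    case False
    show ?thesis
    proof (cases "p \<le> a")
      case True then show ?thesis using False assms by (auto simp: power2_eq_square intro!: mult_right_mono)
    next
      case f2: False then show ?thesis using False assms by (auto simp: power2_eq_square algebra_simps)
    qed
  qed
  then have "(max 0 p)^2/(2*a) - (max 0 (p-a))^2/(2*a) \<le> max 0 p" using assms
    by (simp add: diff_divide_distrib[symmetric] divide_le_eq mult.commute)
  then show ?thesis unfolding e p_def .
qed

lemma util_nonneg: "util Ri B \<ge> 0"
  unfolding util_def len_def by simp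

theorem mainTheorem15:
  fixes N :: "'a set" and c :: real and G :: "'g set"
    and R :: "'a \<Rightarrow> real set \<times> 'g set" and \<alpha> t :: real
    and S :: "'a set" and A :: "real set \<times> 'g set"
  assumes "is_instance N c G R \<alpha>"
    and "t \<ge> 1"
    and "cohesive N R \<alpha> t S"
    and "is_allocation c G \<alpha> A"
    and "EJR1 N R \<alpha> A"
  shows "avg_sat R S A > (t - 2 + 1 / t) / 2"
proof -
  note inst = assms(1)[unfolded is_instance_def]
  note coh = assms(3)[unfolded cohesive_def]
  have finN: "finite N" and Nne: "N \<noteq> {}" and finG: "finite G" and al: "\<alpha> > 0"
    and bund: "\<forall>i\<in>N. is_bundle c G (R i)" using inst by auto
  have SN: "S \<subseteq> N" using coh by auto
  have finS: "finite S" using SN finN finite_subset by blast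
  have nN: "real (card N) \<ge> 1" using finN Nne by (simp add: Suc_leI card_gt_0_iff)
  have "t * real (card N) / \<alpha> > 0" using assms(2) nN al by simp
  then have sgt: "real (card S) > 0" using coh by linarith
  define s where "s = real (card S)"
  define a where "a = t / s"
  have apos: "a > 0" using sgt assms(2) by (simp add: a_def s_def)
  define u where "u = (\<lambda>i. util (R i) A)"
  define phi where "phi = (\<lambda>x::real. max 0 (x*a-1))"
  define GG where "GG = (\<lambda>x::real. (phi x)^2/(2*a))"
  have pieces: "\<And>i. i \<in> N \<Longrightarrow> closed (fst (R i)) \<and> fst (R i) \<subseteq> {0..c} \<and> snd (R i) \<subseteq> G"
    using bund piece_closed unfolding is_bundle_def by blast
  have mono: "bsize (common R S) \<le> bsize (common R T)" if TS: "T \<subseteq> S" "T \<noteq> {}" for T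
  proof -
    obtain i where i: "i \<in> T" using TS by auto
    have iN: "i \<in> N" using i that SN by auto
    have sub1: "(\<Inter>j\<in>S. fst (R j)) \<subseteq> (\<Inter>j\<in>T. fst (R j))" using TS by auto
    have cT: "closed (\<Inter>j\<in>T. fst (R j))" using TS SN pieces by (intro closed_INT) blast
    have bT: "(\<Inter>j\<in>T. fst (R j)) \<subseteq> {0..c}"
      using INT_lower[OF i, of "\<lambda>j. fst (R j)"] pieces[OF iN] by (meson order_trans)
    have cS: "closed (\<Inter>j\<in>S. fst (R j))" using SN pieces by (intro closed_INT) blast
    have fT: "(\<Inter>j\<in>T. fst (R j)) \<in> fmeasurable lborel"
      proof (rule fmeasurable_compact)
      show "compact (\<Inter>j\<in>T. fst (R j))" using cT bT
        by (meson compact_Icc compact_imp_bounded bounded_subset compact_eq_bounded_closed)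
    qed
    have m1: "len (\<Inter>j\<in>S. fst (R j)) \<le> len (\<Inter>j\<in>T. fst (R j))"
      unfolding len_def by (rule measure_mono_fmeasurable[OF sub1 borel_closed[OF cS, unfolded sets_lborel[symmetric]] fT])
    have sub2: "(\<Inter>j\<in>S. snd (R j)) \<subseteq> (\<Inter>j\<in>T. snd (R j))" using TS by auto
    have finT2: "finite (\<Inter>j\<in>T. snd (R j))"
      using INT_lower[OF i, of "\<lambda>j. snd (R j)"] pieces[OF iN] finG by (meson order_trans finite_subset)
    have "card (\<Inter>j\<in>S. snd (R j)) \<le> card (\<Inter>j\<in>T. snd (R j))"
      using sub2 finT2 card_mono by blast
    then show ?thesis using m1 unfolding bsize_def common_def by simp
  qed
  have ejr: "\<exists>j\<in>T. u j > real (card T) * a - 1" if "T \<subseteq> S" "T \<noteq> {}" for T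
  proof -
    have finT: "finite T" using that finS finite_subset by blast
    have cT: "real (card T) \<ge> 1" using finT that by (simp add: Suc_leI card_gt_0_iff)
    have cTS: "real (card T) \<le> s" using that finS card_mono s_def by (simp add: card_mono)
    define t' where "t' = real (card T) * a"
    have tp: "t' > 0" using cT apos by (simp add: t'_def)
    have tt: "t' \<le> t" using cTS apos sgt unfolding t'_def a_def s_def
      by (simp add: field_simps assms(2))
    have "t' * real (card N) / \<alpha> = real (card T) * (t * real (card N) / \<alpha>) / s"
      unfolding t'_def a_def by (simp add: field_simps)
    also have "\<dots> \<le> real (card T) * s / s"
      using coh cT sgt s_def by (intro divide_right_mono mult_left_mono) auto
    also have "\<dots> = real (card T)" using sgt s_def by simp
    finally have c1: "t' * real (card N) / \<alpha> \<le> real (card T)" .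
    have "cohesive N R \<alpha> t' T"
      unfolding cohesive_def using c1 that SN mono[OF that] coh tt by auto
    then show ?thesis using assms(5) tp unfolding EJR1_def u_def t'_def by blast
  qed
  have key: "\<forall>T. T \<subseteq> S \<longrightarrow> card T = k \<longrightarrow> (\<Sum>i\<in>T. u i) \<ge> GG (real k)" for k
  proof (induction k)
    case 0
    show ?case
    proof (intro allI impI)
      fix T assume "T \<subseteq> S" "card T = 0"
      then have "T = {}" using finS finite_subset by fastforce
      then show "(\<Sum>i\<in>T. u i) \<ge> GG (real 0)" by (simp add: GG_def phi_def)
    qed
  next
    case (Suc k)
    show ?case
    proof (intro allI impI)
      fix T assume T: "T \<subseteq> S" "card T = Suc k"
      then have Tne: "T \<noteq> {}" by auto
      have finT: "finite T" using T finS finite_subset by blast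
      obtain j where j: "j \<in> T" "u j > real (card T) * a - 1" using ejr[OF T(1) Tne] by blast
      have uj: "u j \<ge> phi (real (Suc k))" using j T util_nonneg[of "R j" A]
        unfolding phi_def u_def by auto
      have "(\<Sum>i\<in>T - {j}. u i) \<ge> GG (real k)"
        using Suc.IH[rule_format, of "T - {j}"] T j finT by auto
      moreover have "(\<Sum>i\<in>T. u i) = u j + (\<Sum>i\<in>T - {j}. u i)"
        using finT j by (simp add: sum.remove)
      moreover have "GG (real (Suc k)) - GG (real k) \<le> phi (real (Suc k))"
        using phi_step[OF apos, of "real (Suc k)"] unfolding GG_def phi_def by simp
      ultimately show "(\<Sum>i\<in>T. u i) \<ge> GG (real (Suc k))" using uj by linarith
    qed
  qed
  have Sne: "S \<noteq> {}" using sgt by auto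
  obtain j where j: "j \<in> S" "u j > real (card S) * a - 1" using ejr[OF _ Sne] by blast
  have sa: "real (card S) * a = t" using sgt unfolding a_def s_def by simp
  have ujs: "u j > phi (real (card S))" using j sa assms(2) util_nonneg[of "R j" A]
    unfolding phi_def u_def by auto
  have finS': "finite (S - {j})" using finS by simp
  have "card (S - {j}) = card S - 1" using j finS by simp
  then have h1: "(\<Sum>i\<in>S - {j}. u i) \<ge> GG (real (card S - 1))" using key by auto
  have cs1: "real (card S - 1) = real (card S) - 1" using Sne finS
    by (simp add: card_gt_0_iff Suc_leI of_nat_diff)
  have h2: "GG (real (card S)) - GG (real (card S) - 1) \<le> phi (real (card S))"
    using phi_step[OF apos, of "real (card S)"] unfolding GG_def phi_def by simp
  have "(\<Sum>i\<in>S. u i) = u j + (\<Sum>i\<in>S - {j}. u i)"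
    using finS j by (simp add: sum.remove)
  moreover have "(\<Sum>i\<in>S - {j}. u i) \<ge> GG (real (card S) - 1)" using h1 cs1 by simp
  ultimately have sum_gt: "(\<Sum>i\<in>S. u i) > GG s" using h2 ujs unfolding s_def by linarith
  have "GG s = s * ((t - 2 + 1/t)/2)"
  proof -
    have "phi s = t - 1" using sgt assms(2) unfolding phi_def a_def s_def by simp
    then have "GG s = (t-1)^2 / (2 * (t/s))" unfolding GG_def a_def by simp
    also have "\<dots> = s * ((t - 2 + 1/t)/2)" using sgt assms(2) unfolding s_def
      by (simp add: field_simps power2_eq_square)
    finally show ?thesis .
  qed
  then have "(\<Sum>i\<in>S. u i) / s > (t - 2 + 1/t)/2" using sum_gt sgt unfolding s_def
    by (simp add: pos_less_divide_eq mult.commute)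
  then show ?thesis unfolding avg_sat_def u_def s_def .
qed
end
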